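(* Let $j\ge 1$, $\lambda\ge 1$, $s\ge 0$ be integers and let $w=w_{j,s,\lambda}$ be the leaf weight sequence defined in the context. Then for every integer $n>3+2s+\lambda j$ we have $1\le n-s-w(n-j)<n$ and \[ w(n)=w\bigl(n-s-w(n-j)\bigr)+\lambda j . \]
   Context: Fix integers $j\ge1$, $\lambda\ge1$, $s\ge0$. Define a labeled infinite rooted tree $\mathcal K$ as follows. It has "supernodes" $S_0,S_1,S_2,\dots$ with an edge between $S_i$ and $S_{i+1}$ for every $i\ge0$ ($S_0$ is the root). $S_0$ has two further children: the "initial leaf" and a node $N_0$, which is a leaf. For each $i\ge1$, $S_i$ has a child $N_i$ (the "knot node"), and attached to $N_i$ are $\lambda$ chains, each a path of $i\cdot j$ nodes hanging from $N_i$; the last (bottom) node of each chain is a leaf. Each supernode carries $s$ labels and every other node carries exactly one label. The labels are the consecutive positive integers $1,2,3,\dots$, assigned in the following order: initial leaf, $S_0$, $N_0$; then for $i=1,2,3,\dots$: $S_i$ (its $s$ labels), $N_i$, then the nodes of the first chain of $N_i$ from top to bottom, then the second chain, ..., then the $\lambda$-th chain. The initial leaf has weight $1$; every other leaf of $\mathcal K$ (namely $N_0$ and the bottom node of each chain) has weight $j$. The leaf weight sequence $w(n)=w_{j,s,\lambda}(n)$ ($n\ge1$) is the total weight of the leaves of $\mathcal K$ whose label is $\le n$. Explicitly, $w(n)=1+j\cdot\#\{\ell\in L:\ell\le n\}$, where $L$ consists of the number $s+2$ together with the numbers $L_{i,c}=s+2+\sum_{l=1}^{i-1}(s+1+\lambda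 l j)+s+1+c\,i\,j$ for $i\ge1$, $1\le c\le\lambda$. *)

theory Defs
  imports Main
begin

definition Lic :: "nat \<Rightarrow> nat \<Rightarrow> nat \<Rightarrow> nat \<Rightarrow> nat \<Rightarrow> nat" where
  "Lic j s lam i c = s + 2 + (\<Sum>l = 1..i - 1. s + 1 + lam * l * j) + s + 1 + c * i * j"

definition leafLabels :: "nat \<Rightarrow> nat \<Rightarrow> nat \<Rightarrow> nat set" where
  "leafLabels j s lam = {s + 2} \<union> {Lic j s lam i c | i c. 1 \<le> i \<and> 1 \<le> c \<and> c \<le> lam}"

definition leafWeight :: "nat \<Rightarrow> nat \<Rightarrow> nat \<Rightarrow> nat \<Rightarrow> nat" where
  "leafWeight j s lam n = 1 + j * card {l \<in> leafLabels j s lam. l \<le> n}"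

end

theory Submission
  imports Defs
begin

context
  fixes j s lam :: nat
  assumes j1: "j \<ge> 1" and lam1: "lam \<ge> 1"
begin

definition TT :: "nat \<Rightarrow> nat" where
  "TT i = s + 2 + (\<Sum>l = 1..i. s + 1 + lam * l * j)"

definition gg :: "nat \<Rightarrow> nat" where
  "gg k = (if k = 0 then s + 2 else TT ((k - 1) div lam) + s + 1 + ((k - 1) mod lam + 1) * ((k - 1) div lam + 1) * j)"

definition cnt :: "nat \<Rightarrow> nat" where
  "cnt N = card {l \<in> leafLabels j s lam. l \<le> N}"

lemma TT_Suc: "TT (Suc i) = TT i + s + 1 + lam * Suc i * j"
  by (simp add: TT_def)

lemma TT_0: "TT 0 = s + 2" by (simp add: TT_def)

lemma TT_ge: "TT i \<ge> s + 2" by (simp add: TT_def)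

lemma TT_ge_i: "TT i \<ge> i"
  by (induction i) (auto simp: TT_Suc TT_0 intro: order_trans)

lemma Lic_eq: "Lic j s lam (Suc a) c = TT a + s + 1 + c * Suc a * j"
  by (simp add: Lic_def TT_def)

lemma gg_at:
  assumes "1 \<le> c" "c \<le> lam"
  shows "gg (lam * a + c) = TT a + s + 1 + c * Suc a * j"
proof -
  have e: "lam * a + c - 1 = (c - 1) + a * lam" using assms by (simp add: mult.commute)
  have "(c - 1) div lam = 0" "(c - 1) mod lam = c - 1" using assms by auto
  then have d: "(lam * a + c - 1) div lam = a" and m: "(lam * a + c - 1) mod lam = c - 1"
    unfolding e using lam1 by simp_all
  have "lam * a + c \<noteq> 0" using assms by simp
  then show ?thesis unfolding gg_def using d m assms by simp
qed

lemma gg_lam: "gg (lam * a) = TT a"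
proof (cases a)
  case 0 then show ?thesis by (simp add: gg_def TT_0)
next
  case (Suc b)
  have "lam * a = lam * b + lam" using Suc by simp
  moreover have "gg (lam * b + lam) = TT b + s + 1 + lam * Suc b * j" using gg_at[of lam b] lam1 by simp
  ultimately show ?thesis using Suc TT_Suc[of b] by metis
qed

lemma gg_step: "gg k < gg (Suc k)"
proof (cases k)
  case 0
  then show ?thesis using gg_at[of 1 0] lam1 j1 by (simp add: gg_def TT_0)
next
  case (Suc k')
  define a where "a = k' div lam"
  define b where "b = k' mod lam"
  have kk: "k = lam * a + (b + 1)" using Suc by (simp add: a_def b_def)
  have bl: "b < lam" using lam1 by (simp add: b_def)
  have gk: "gg k = TT a + s + 1 + (b+1) * Suc a * j" using gg_at[of "b+1" a] bl kk by simp
  show ?thesis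
  proof (cases "b + 2 \<le> lam")
    case True
    have "Suc k = lam * a + (b + 2)" using kk by simp
    then have "gg (Suc k) = TT a + s + 1 + (b+2) * Suc a * j" using gg_at[of "b+2" a] True by simp
    moreover have "(b+1) * Suc a * j < (b+2) * Suc a * j" using j1
      by (intro mult_strict_right_mono) auto
    ultimately show ?thesis using gk by linarith
  next
    case False
    then have bb: "b + 1 = lam" using bl by simp
    have "Suc k = lam * Suc a + 1" using kk bb by simp
    then have "gg (Suc k) = TT (Suc a) + s + 1 + 1 * Suc (Suc a) * j" using gg_at[of 1 "Suc a"] lam1 by simp
    have "gg k = TT a + s + 1 + lam * Suc a * j" by (metis gk bb)
    then have "gg k = TT (Suc a)" by (simp add: TT_Suc)
    then show ?thesis using \<open>gg (Suc k) = _\<close> by simp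
  qed
qed

lemma gg_smono: "strict_mono gg"
  using gg_step by (simp add: strict_mono_Suc_iff)

lemma range_gg: "leafLabels j s lam = range gg"
proof
  show "leafLabels j s lam \<subseteq> range gg"
  proof
    fix x assume "x \<in> leafLabels j s lam"
    then consider "x = s + 2" | i c where "x = Lic j s lam i c" "1 \<le> i" "1 \<le> c" "c \<le> lam"
      unfolding leafLabels_def by blast
    then show "x \<in> range gg"
    proof cases
      case 1 then show ?thesis by (metis gg_def rangeI)
    next
      case 2
      then obtain a where a: "i = Suc a" by (cases i) auto
      have "x = gg (lam * a + c)" using 2 a gg_at[of c a] Lic_eq by simp
      then show ?thesis by simp
    qed
  qed
next
  show "range gg \<subseteq> leafLabels j s lam"
  proof
    fix x assume "x \<in> range gg"
    then obtain k where x: "x = gg k" by auto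
    show "x \<in> leafLabels j s lam"
    proof (cases k)
      case 0 then show ?thesis using x by (simp add: gg_def leafLabels_def)
    next
      case (Suc k')
      define a where "a = k' div lam"
      define b where "b = k' mod lam"
      have kk: "k = lam * a + (b + 1)" using Suc by (simp add: a_def b_def)
      have bl: "b < lam" using lam1 by (simp add: b_def)
      have "x = Lic j s lam (Suc a) (b+1)" using gg_at[of "b+1" a] bl kk x Lic_eq by simp
      then show ?thesis unfolding leafLabels_def using bl
        by (intro UnI2 CollectI exI[of _ "Suc a"] exI[of _ "b+1"]) auto
    qed
  qed
qed

lemma cnt_char:
  assumes "K \<ge> 1" "gg (K - 1) \<le> N" "N < gg K"
  shows "cnt N = K"
proof -
  have inj: "inj gg" using gg_smono strict_mono_imp_inj_on by blast
  have "{l \<in> leafLabels j s lam. l \<le> N} = gg ` {k. gg k \<le> N}"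
    unfolding range_gg by auto
  moreover have "{k. gg k \<le> N} = {..<K}"
  proof safe
    fix k assume "gg k \<le> N"
    then have "gg k < gg K" using assms by simp
    then show "k < K" using gg_smono by (simp add: strict_mono_less)
  next
    fix k assume "k < K"
    then have "k \<le> K - 1" by simp
    then have "gg k \<le> gg (K - 1)" using gg_smono by (simp add: strict_mono_less_eq)
    then show "gg k \<le> N" using assms by simp
  qed
  ultimately show ?thesis unfolding cnt_def using inj
    by (simp add: card_image inj_on_subset)
qed

lemma cnt_block:
  assumes "r \<le> s + 1 + lam * Suc a * j"
  shows "cnt (TT a + r) = 1 + lam * a + (r - (s + 1)) div (Suc a * j)"
proof -
  define D where "D = Suc a * j"
  define q where "q = (r - (s + 1)) div D"
  have Dp: "D > 0" using j1 by (simp add: D_def)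
  have qD: "q * D \<le> r - (s + 1)" unfolding q_def by (rule div_times_less_eq_dividend)
  have qD2: "r - (s + 1) < (q + 1) * D" unfolding q_def using Dp
    using dividend_less_div_times[of D "r - (s+1)"] by (simp add: algebra_simps)
  have "r - (s + 1) \<le> lam * Suc a * j" using assms by linarith
  then have "r - (s + 1) \<le> lam * D" by (simp only: D_def mult.assoc)
  then have ql: "q \<le> lam" unfolding q_def using Dp
    by (metis div_le_mono nonzero_mult_div_cancel_right not_less0)
  have lo: "gg (lam * a + q) \<le> TT a + r"
  proof (cases "q = 0")
    case True then show ?thesis using gg_lam by simp
  next
    case False
    then have "gg (lam * a + q) = TT a + s + 1 + q * D" using gg_at[of q a] ql
      by (simp add: D_def algebra_simps)
    moreover have "r \<ge> s + 1" using False qD Dp by (metis diff_is_0_eq' div_0 le_cases q_def)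
    ultimately show ?thesis using qD by simp
  qed
  have hi: "TT a + r < gg (lam * a + q + 1)"
  proof (cases "q < lam")
    case True
    then have "gg (lam * a + (q + 1)) = TT a + s + 1 + (q + 1) * D" using gg_at[of "q+1" a]
      by (simp add: D_def algebra_simps)
    then show ?thesis using qD2 Dp by (simp add: add.assoc)
  next
    case False
    then have "q = lam" using ql by simp
    then have "lam * a + q + 1 = lam * Suc a + 1" by simp
    moreover have "gg (lam * Suc a + 1) = TT (Suc a) + s + 1 + 1 * Suc (Suc a) * j"
      using gg_at[of 1 "Suc a"] lam1 by simp
    ultimately have "gg (lam * a + q + 1) = TT (Suc a) + s + 1 + 1 * Suc (Suc a) * j"
      by metis
    then show ?thesis using assms by (simp add: TT_Suc)
  qed
  have "cnt (TT a + r) = lam * a + q + 1"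
    by (rule cnt_char) (use lo hi in auto)
  then show ?thesis by (simp add: q_def D_def)
qed

lemma main_nat:
  assumes nbig: "n > 3 + 2 * s + lam * j"
  shows "\<exists>m. m \<ge> 1 \<and> n = m + s + 1 + j * cnt (n - j) \<and> cnt n = cnt m + lam"
proof -
  define i where "i = (LEAST i. n \<le> TT i)"
  have ex: "n \<le> TT n" by (rule TT_ge_i)
  have ni: "n \<le> TT i" unfolding i_def using ex by (rule LeastI)
  have T1: "TT 1 = 3 + 2 * s + lam * j" by (simp add: TT_def)
  have "i \<noteq> 0"
  proof
    assume "i = 0" with ni have "n \<le> TT 0" by simp
    then show False using nbig TT_0 by simp
  qed
  moreover have "i \<noteq> 1"
  proof
    assume "i = 1" with ni have "n \<le> TT 1" by simp
    then show False using nbig T1 by simp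
  qed
  ultimately obtain b where ib: "i = Suc (Suc b)" by (metis One_nat_def not0_implies_Suc)
  define a where "a = Suc b"
  have "\<not> n \<le> TT a" unfolding a_def
    using not_less_Least[of "Suc b" "\<lambda>i. n \<le> TT i"] ib i_def by simp
  then have na: "TT a < n" by simp
  have nSa: "n \<le> TT (Suc a)" using ni ib a_def by simp
  define P where "P = a * j"
  define D where "D = Suc a * j"
  have DP: "D = P + j" by (simp add: D_def P_def)
  have Pj: "j \<le> P" using j1 by (simp add: P_def a_def)
  have TTa: "TT a = TT b + s + 1 + lam * P" by (simp add: a_def TT_Suc P_def algebra_simps)
  have TTSa: "TT (Suc a) = TT a + s + 1 + lam * D" by (simp add: TT_Suc D_def algebra_simps)
  define r where "r = n - TT a"
  have nr: "n = TT a + r" and r1: "r \<ge> 1" and rD: "r \<le> s + 1 + lam * D"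
    using na nSa TTSa by (auto simp: r_def)
  have cntn: "cnt n = 1 + lam * a + (r - (s + 1)) div D"
    unfolding nr D_def by (rule cnt_block) (use rD in \<open>simp add: D_def algebra_simps\<close>)
  have bS: "lam * a = lam * b + lam" by (simp add: a_def)
  show ?thesis
  proof (cases "r > j")
    case True
    have rgt: "j < r" using True .
    define q where "q = (r - j - (s + 1)) div D"
    have nj: "n - j = TT a + (r - j)" using nr True by simp
    have cntnj: "cnt (n - j) = 1 + lam * a + q"
      unfolding nj q_def D_def by (rule cnt_block) (use rD in \<open>simp add: D_def algebra_simps\<close>)
    have qD: "q * D \<le> r - j - (s + 1)" unfolding q_def by (rule div_times_less_eq_dividend)
    have "j * q \<le> q * D" using DP by simp
    then have jq: "j * q \<le> r - j" using qD by linarith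
    define r' where "r' = r - j - j * q"
    have rr: "r = r' + j + j * q" using jq True by (simp add: r'_def)
    have "n = (TT b + r') + s + 1 + j * (1 + lam * a + q)"
      using nr TTa rr by (simp add: algebra_simps P_def)
    then have neq: "n = (TT b + r') + s + 1 + j * cnt (n - j)" using cntnj by simp
    have key: "(r' - (s + 1)) div P = (r - (s + 1)) div D \<and> r' \<le> s + 1 + lam * P"
    proof (cases "r - j < s + 1")
      case True
      then have q0: "q = 0" by (simp add: q_def)
      then have r'e: "r' = r - j" by (simp add: r'_def)
      have "(r' - (s + 1)) = 0" using r'e True by simp
      moreover have "r - (s + 1) < D" using True DP Pj rgt j1 by linarith
      moreover have "lam * P \<ge> 0" by simp
      ultimately show ?thesis using r'e True by simp
    next
      case False
      define x where "x = r - j - (s + 1)"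
      define e where "e = x mod D"
      have Dp: "D > 0" using DP j1 by simp
      have xqe: "x = q * D + e" by (simp add: x_def e_def q_def)
      have eD: "e < D" using Dp by (simp add: e_def)
      have y1: "r' - (s + 1) = q * P + e"
        using xqe rr False DP unfolding x_def by (simp add: algebra_simps)
      have y2: "r - (s + 1) = q * D + (e + j)"
        using xqe False unfolding x_def by simp
      have Y: "(q * P + e) div P = (q * D + (e + j)) div D"
      proof (cases "e < P")
        case True
        have "(q * P + e) div P = q" using True by simp
        moreover have "(q * D + (e + j)) div D = q" using True DP by simp
        ultimately show ?thesis by simp
      next
        case False
        have "e - P < P" using eD DP Pj by linarith
        then have "(q * P + e) div P = q + 1"
          using False by (metis (no_types) add.commute add_diff_inverse_nat div_mult_self2
              le_add_diff_inverse2 less_nat_zero_code not_less div_add_self1 div_less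
              Pj j1 le_trans linorder_not_le add_0 mult.commute one_neq_zero)
        moreover have "(q * D + (e + j)) div D = q + 1"
        proof -
          have h1: "q * D + (e + j) = (e - P) + (q + 1) * D" using False DP by simp
          have h2: "e - P < D" using \<open>e - P < P\<close> DP by simp
          have h3: "((e - P) + (q + 1) * D) div D = (q + 1) + (e - P) div D"
            using Dp by (intro div_mult_self1) simp
          have h4: "(e - P) div D = 0" using h2 by simp
          show ?thesis by (simp only: h1 h3 h4)
        qed
        ultimately show ?thesis by simp
      qed
      have bnd: "q * D + e + j \<le> lam * D" using y2 rD by linarith
      have "q * P + e \<le> lam * P"
      proof (cases "q + 2 \<le> lam")
        case True
        have "q * P + e < q * P + 2 * P" using eD DP Pj by linarith
        also have "\<dots> = (q + 2) * P" by (simp add: algebra_simps)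
        also have "\<dots> \<le> lam * P" using True by (intro mult_right_mono) auto
        finally show ?thesis by simp
      next
        case False
        have "q * D < lam * D" using bnd j1 by linarith
        then have "q < lam" by simp
        then have ql: "q + 1 = lam" using False by simp
        then have "lam * D = q * D + D" by (metis add.commute mult_Suc plus_1_eq_Suc)
        then have "e \<le> P" using bnd DP by linarith
        then have "q * P + e \<le> q * P + P" by simp
        also have "\<dots> = lam * P" using ql by (metis add.commute mult_Suc plus_1_eq_Suc)
        finally show ?thesis .
      qed
      then show ?thesis using y1 y2 Y by simp
    qed
    have cntm: "cnt (TT b + r') = 1 + lam * b + (r' - (s + 1)) div P"
      unfolding P_def a_def by (rule cnt_block) (use key in \<open>simp add: P_def a_def algebra_simps\<close>)
    have "TT b + r' \<ge> 1" using TT_ge[of b] by simp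
    moreover have "cnt n = cnt (TT b + r') + lam" using cntn cntm key bS by simp
    ultimately show ?thesis using neq by blast
  next
    case False
    define r'' where "r'' = r + s + 1 + lam * P - j"
    have lP: "lam * P \<ge> j" using Pj lam1 by (metis le_trans mult_le_mono1 mult_1)
    have nj: "n - j = TT b + r''" unfolding r''_def using nr TTa lP by simp
    have r''b: "r'' \<le> s + 1 + lam * P" using False unfolding r''_def by simp
    have cntnj: "cnt (n - j) = 1 + lam * b + (r'' - (s + 1)) div P"
      unfolding nj P_def a_def by (rule cnt_block) (use r''b in \<open>simp add: P_def a_def algebra_simps\<close>)
    have r''e: "r'' - (s + 1) = r + lam * P - j" unfolding r''_def using lP by simp
    have Pp: "P > 0" using Pj j1 by simp
    have rD0: "(r - (s + 1)) div D = 0" using False DP Pj j1 by simp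
    show ?thesis
    proof (cases "r = j")
      case True
      have "(r'' - (s + 1)) div P = lam" unfolding r''e True using Pp by simp
      then have c1: "cnt (n - j) = 1 + lam * a" using cntnj bS by simp
      have "n = TT b + s + 1 + j * (1 + lam * a)"
        using nr TTa True by (simp add: algebra_simps P_def)
      then have neq: "n = TT b + s + 1 + j * cnt (n - j)" using c1 by simp
      have cm: "cnt (TT b + 0) = 1 + lam * b + (0 - (s + 1)) div (Suc b * j)"
        by (rule cnt_block) simp
      have "cnt n = cnt (TT b) + lam" using cntn rD0 cm bS by simp
      moreover have "TT b \<ge> 1" using TT_ge[of b] by simp
      ultimately show ?thesis using neq by (metis add_0)
    next
      case False2: False
      then have rj: "r < j" using False by simp
      have "r + lam * P - j = (P - j + r) + (lam - 1) * P"
        using lam1 Pj rj by (simp add: algebra_simps diff_mult_distrib)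
      moreover have "P - j + r < P" using rj Pj by simp
      ultimately have "(r'' - (s + 1)) div P = lam - 1" unfolding r''e using Pp by simp
      then have c1: "cnt (n - j) = lam * a" using cntnj bS lam1 by simp
      have "n = (TT b + r) + s + 1 + j * (lam * a)"
        using nr TTa by (simp add: algebra_simps P_def)
      then have neq: "n = (TT b + r) + s + 1 + j * cnt (n - j)" using c1 by simp
      have cm: "cnt (TT b + r) = 1 + lam * b + (r - (s + 1)) div P"
        unfolding P_def a_def by (rule cnt_block) (use rj lP in \<open>simp add: P_def a_def algebra_simps\<close>)
      have "(r - (s + 1)) div P = 0" using rj Pj by simp
      then have "cnt n = cnt (TT b + r) + lam" using cntn rD0 cm bS by simp
      moreover have "TT b + r \<ge> 1" using TT_ge[of b] by simp
      ultimately show ?thesis using neq by blast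
    qed
  qed
qed

lemma lw_cnt: "leafWeight j s lam x = 1 + j * cnt x"
  by (simp add: leafWeight_def cnt_def)

end

theorem mainTheorem1:
  fixes j lam s n :: nat
  assumes "j \<ge> 1" and "lam \<ge> 1" and "n > 3 + 2 * s + lam * j"
  shows "1 \<le> int n - int s - int (leafWeight j s lam (n - j))
       \<and> int n - int s - int (leafWeight j s lam (n - j)) < int n
       \<and> leafWeight j s lam n
           = leafWeight j s lam (nat (int n - int s - int (leafWeight j s lam (n - j)))) + lam * j"
proof -
  obtain m where m1: "m \<ge> 1" and neq: "n = m + s + 1 + j * cnt j s lam (n - j)"
    and cm: "cnt j s lam n = cnt j s lam m + lam"
    using main_nat[OF assms] by blast
  have w: "\<And>x. leafWeight j s lam x = 1 + j * cnt j s lam x" using lw_cnt[OF assms(1,2)] .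
  have e: "int n - int s - int (leafWeight j s lam (n - j)) = int m"
  proof -
    have "int n = int m + int s + 1 + int j * int (cnt j s lam (n - j))"
      using arg_cong[OF neq, of int] by simp
    then show ?thesis unfolding w by simp
  qed
  have "m < n" using neq by linarith
  then show ?thesis unfolding e using m1 cm w by (simp add: algebra_simps)
qed

end
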